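(* For every $n\ge 3$, $\lceil \log_2 n\rceil\le \mathrm{isat}(n,\bowtie)\le \binom{n}{2}+2n-1$.
   Context: $\mathcal{B}_n$ denotes the Boolean lattice $(2^{[n]},\subseteq)$. A family $\mathcal{F}\subseteq 2^{[n]}$ (ordered by inclusion) is induced-$\mathcal{P}$-saturated if it contains no induced copy of $\mathcal{P}$ (an injection $f$ with $u\le v\iff f(u)\subseteq f(v)$) but every family $\mathcal{F}'$ with $\mathcal{F}\subsetneq\mathcal{F}'\subseteq 2^{[n]}$ contains one. $\mathrm{isat}(n,\mathcal{P})$ is the minimum size of an induced-$\mathcal{P}$-saturated family in $\mathcal{B}_n$. The butterfly $\bowtie$ is the four-element poset on $\{A,B,C,D\}$ whose only strict relations are $A<B$, $A<D$, $C<B$, $C<D$ (so $A\parallel C$ and $B\parallel D$). *)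

theory Defs
  imports Complex_Main
begin

definition has_induced_copy :: "'a set \<Rightarrow> ('a \<Rightarrow> 'a \<Rightarrow> bool) \<Rightarrow> 'b set set \<Rightarrow> bool" where
  "has_induced_copy P le F \<longleftrightarrow>
     (\<exists>f. inj_on f P \<and> f ` P \<subseteq> F \<and> (\<forall>u\<in>P. \<forall>v\<in>P. le u v \<longleftrightarrow> f u \<subseteq> f v))"

definition induced_saturated :: "nat \<Rightarrow> 'a set \<Rightarrow> ('a \<Rightarrow> 'a \<Rightarrow> bool) \<Rightarrow> nat set set \<Rightarrow> bool" where
  "induced_saturated n P le F \<longleftrightarrow>
     F \<subseteq> Pow {1..n} \<and> \<not> has_induced_copy P le F \<and>
     (\<forall>F'. F \<subset> F' \<and> F' \<subseteq> Pow {1..n} \<longrightarrow> has_induced_copy P le F')"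

definition isat :: "nat \<Rightarrow> 'a set \<Rightarrow> ('a \<Rightarrow> 'a \<Rightarrow> bool) \<Rightarrow> nat" where
  "isat n P le = (LEAST k. \<exists>F. induced_saturated n P le F \<and> card F = k)"

text \<open>The butterfly: A = 0, B = 1, C = 2, D = 3, with strict relations A<B, A<D, C<B, C<D.\<close>

definition butterfly :: "nat set" where
  "butterfly = {0, 1, 2, 3}"

definition butterfly_le :: "nat \<Rightarrow> nat \<Rightarrow> bool" where
  "butterfly_le u v \<longleftrightarrow> u = v \<or> (u, v) \<in> {(0, 1), (0, 3), (2, 1), (2, 3)}"

end

theory Submission
  imports Defs
begin

definition bfrel :: "nat set \<Rightarrow> nat set \<Rightarrow> nat set \<Rightarrow> nat set \<Rightarrow> bool" where
 "bfrel A B C D \<longleftrightarrow> A \<subseteq> B \<and> A \<subseteq> D \<and> C \<subseteq> B \<and> C \<subseteq> D \<and> \<not> A \<subseteq> C \<and> \<not> C \<subseteq> A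
   \<and> \<not> B \<subseteq> D \<and> \<not> D \<subseteq> B \<and> \<not> B \<subseteq> A \<and> \<not> D \<subseteq> A \<and> \<not> B \<subseteq> C \<and> \<not> D \<subseteq> C"

lemma bf_iff: "has_induced_copy butterfly butterfly_le G \<longleftrightarrow>
   (\<exists>A\<in>G. \<exists>B\<in>G. \<exists>C\<in>G. \<exists>D\<in>G. bfrel A B C D)"
proof
  assume "has_induced_copy butterfly butterfly_le G"
  then obtain f where f: "f ` butterfly \<subseteq> G"
     "\<forall>u\<in>butterfly. \<forall>v\<in>butterfly. butterfly_le u v \<longleftrightarrow> f u \<subseteq> f v"
    unfolding has_induced_copy_def by blast
  have "bfrel (f 0) (f 1) (f 2) (f 3)"
    using f(2) unfolding bfrel_def butterfly_def butterfly_le_def by simp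
  moreover have "f 0 \<in> G" "f 1 \<in> G" "f 2 \<in> G" "f 3 \<in> G" using f(1) unfolding butterfly_def by auto
  ultimately show "\<exists>A\<in>G. \<exists>B\<in>G. \<exists>C\<in>G. \<exists>D\<in>G. bfrel A B C D" by blast
next
  assume "\<exists>A\<in>G. \<exists>B\<in>G. \<exists>C\<in>G. \<exists>D\<in>G. bfrel A B C D"
  then obtain A B C D where G: "A \<in> G" "B \<in> G" "C \<in> G" "D \<in> G" and r: "bfrel A B C D" by blast
  define f where "f = (\<lambda>x::nat. if x = 0 then A else if x = 1 then B else if x = 2 then C else D)"
  have "inj_on f butterfly" using r unfolding inj_on_def f_def butterfly_def bfrel_def by auto
  moreover have "f ` butterfly \<subseteq> G" using G unfolding f_def butterfly_def by auto
  moreover have "\<forall>u\<in>butterfly. \<forall>v\<in>butterfly. butterfly_le u v \<longleftrightarrow> f u \<subseteq> f v"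
    using r unfolding f_def butterfly_def butterfly_le_def bfrel_def by auto
  ultimately show "has_induced_copy butterfly butterfly_le G" unfolding has_induced_copy_def by blast
qed

lemma bf_mono: fixes G :: "nat set set" shows "has_induced_copy butterfly butterfly_le G \<Longrightarrow> G \<subseteq> G' \<Longrightarrow> has_induced_copy butterfly butterfly_le G'"
  by (simp only: bf_iff) blast

lemma no_bf_insert_single:
  fixes F :: "nat set set"
  assumes nb: "\<not> has_induced_copy butterfly butterfly_le F"
    and ni: "\<forall>X\<in>F. i \<notin> X"
  shows "\<not> has_induced_copy butterfly butterfly_le (insert {i} F)"
proof
  assume "has_induced_copy butterfly butterfly_le (insert {i} F)"
  then obtain A B C D where G: "A \<in> insert {i} F" "B \<in> insert {i} F" "C \<in> insert {i} F" "D \<in> insert {i} F"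
    and r: "bfrel A B C D" unfolding bf_iff by blast
  have "A \<noteq> {}" "C \<noteq> {}" using r unfolding bfrel_def by auto
  have "A \<noteq> {i}" using G r ni unfolding bfrel_def by blast
  moreover have "C \<noteq> {i}" using G r ni unfolding bfrel_def by blast
  moreover have "B \<noteq> {i}" using G r ni \<open>A \<noteq> {}\<close> \<open>C \<noteq> {}\<close> unfolding bfrel_def by blast
  moreover have "D \<noteq> {i}" using G r ni \<open>A \<noteq> {}\<close> \<open>C \<noteq> {}\<close> unfolding bfrel_def by blast
  ultimately have "A \<in> F" "B \<in> F" "C \<in> F" "D \<in> F" using G by auto
  then show False using nb r unfolding bf_iff by blast
qed

lemma bfrel_contra:
  assumes r: "bfrel A B C D" and S: "S \<in> {A,B,C,D}" and X: "X \<in> {A,B,C,D}" and SX: "S \<subset> X"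
   and P: "\<And>Y. Y\<in>{A,B,C,D} \<Longrightarrow> Y \<subset> X \<Longrightarrow> Y \<noteq> S \<Longrightarrow> Y \<subseteq> S"
  shows False
proof -
  have r': "A \<subseteq> B" "A \<subseteq> D" "C \<subseteq> B" "C \<subseteq> D" "\<not> A \<subseteq> C" "\<not> C \<subseteq> A"
   "\<not> B \<subseteq> D" "\<not> D \<subseteq> B" "\<not> B \<subseteq> A" "\<not> D \<subseteq> A" "\<not> B \<subseteq> C" "\<not> D \<subseteq> C"
    using r unfolding bfrel_def by auto
  have "S \<subseteq> X" "S \<noteq> X" using SX by auto
  from S consider "S = A" | "S = B" | "S = C" | "S = D" by blast
  then show False
  proof cases
    case 1
    from X consider "X = A" | "X = B" | "X = C" | "X = D" by blast
    then show False
    proof cases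
      case 2 then show False using P[of C] r' 1 by auto
    next
      case 4 then show False using P[of C] r' 1 by auto
    qed (use 1 \<open>S \<subseteq> X\<close> \<open>S \<noteq> X\<close> r' in auto)
  next
    case 3
    from X consider "X = A" | "X = B" | "X = C" | "X = D" by blast
    then show False
    proof cases
      case 2 then show False using P[of A] r' 3 by auto
    next
      case 4 then show False using P[of A] r' 3 by auto
    qed (use 3 \<open>S \<subseteq> X\<close> \<open>S \<noteq> X\<close> r' in auto)
  qed (use X \<open>S \<subseteq> X\<close> \<open>S \<noteq> X\<close> r' in auto)
qed

lemma no_bf_insert_repl:
  fixes F :: "nat set set"
  assumes nb: "\<not> has_induced_copy butterfly butterfly_le F"
    and XF: "X \<in> F" and SX: "S \<subset> X"
    and P1: "\<And>Y. Y \<in> F \<Longrightarrow> S \<subseteq> Y \<longleftrightarrow> X \<subseteq> Y"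
    and P2: "\<And>Y. Y \<in> F \<Longrightarrow> Y \<subset> X \<Longrightarrow> Y \<subseteq> S"
  shows "\<not> has_induced_copy butterfly butterfly_le (insert S F)"
proof
  assume "has_induced_copy butterfly butterfly_le (insert S F)"
  then obtain A B C D where G: "A \<in> insert S F" "B \<in> insert S F" "C \<in> insert S F" "D \<in> insert S F"
    and r: "bfrel A B C D" unfolding bf_iff by blast
  define rr where "rr = (\<lambda>Z. if Z = S then X else Z)"
  have key: "rr Z \<subseteq> rr W \<longleftrightarrow> Z \<subseteq> W"
    if "Z \<in> insert S F" "W \<in> insert S F" "\<not> (Z = S \<and> W = X)" "\<not> (Z = X \<and> W = S)" for Z W
  proof (cases "Z = S")
    case True
    then show ?thesis using that P1 unfolding rr_def by auto
  next
    case False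
    then have ZF: "Z \<in> F" using that by auto
    show ?thesis
    proof (cases "W = S")
      case True
      then have "Z \<noteq> X" using that by auto
      then show ?thesis using True False P2[OF ZF] SX unfolding rr_def by auto
    next
      case False
      then show ?thesis using \<open>Z \<noteq> S\<close> unfolding rr_def by auto
    qed
  qed
  have rin: "rr Z \<in> F" if "Z \<in> insert S F" for Z using that XF unfolding rr_def by auto
  show False
  proof (cases "S \<in> {A,B,C,D} \<and> X \<in> {A,B,C,D}")
    case False
    have k2: "rr Z \<subseteq> rr W \<longleftrightarrow> Z \<subseteq> W" if "Z \<in> {A,B,C,D}" "W \<in> {A,B,C,D}" for Z W
    proof -
      have "\<not> (Z = S \<and> W = X)" "\<not> (Z = X \<and> W = S)" using that False by auto
      moreover have "Z \<in> insert S F" "W \<in> insert S F" using that G by auto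
      ultimately show ?thesis using key by blast
    qed
    have "bfrel (rr A) (rr B) (rr C) (rr D)"
      using r unfolding bfrel_def
      by (simp only: k2[of A B] k2[of A C] k2[of A D] k2[of B A] k2[of B C] k2[of B D]
        k2[of C A] k2[of C B] k2[of C D] k2[of D A] k2[of D B] k2[of D C] insert_iff simp_thms)
    then show False using nb rin[OF G(1)] rin[OF G(2)] rin[OF G(3)] rin[OF G(4)] unfolding bf_iff by blast
  next
    case True
    have "Y \<subseteq> S" if "Y\<in>{A,B,C,D}" "Y \<subset> X" "Y \<noteq> S" for Y
      using P2 that G by auto
    then show False using bfrel_contra[OF r _ _ SX] True by blast
  qed
qed

lemma lower:
  fixes F :: "nat set set"
  assumes sat: "induced_saturated n butterfly butterfly_le F"
  shows "n \<le> 2 ^ card F"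
proof (rule ccontr)
  assume "\<not> n \<le> 2 ^ card F"
  have FP: "F \<subseteq> Pow {1..n}" and nb: "\<not> has_induced_copy butterfly butterfly_le F"
    and full: "\<And>F'. F \<subset> F' \<Longrightarrow> F' \<subseteq> Pow {1..n} \<Longrightarrow> has_induced_copy butterfly butterfly_le F'"
    using sat unfolding induced_saturated_def by auto
  have finF: "finite F" using FP by (meson finite_Pow_iff finite_atLeastAtMost finite_subset)
  have lt: "card (Pow F) < card {1..n}" using \<open>\<not> n \<le> 2 ^ card F\<close> finF
    by (simp add: card_Pow)
  define t where "t = (\<lambda>i. {X\<in>F. i \<in> X})"
  have "\<not> inj_on t {1..n}"
  proof
    assume "inj_on t {1..n}"
    then have "card {1..n} \<le> card (Pow F)"
      by (rule card_inj_on_le) (auto simp: t_def finF)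
    then show False using lt by simp
  qed
  then obtain i j where ij: "i \<in> {1..n}" "j \<in> {1..n}" "i \<noteq> j" "t i = t j"
    unfolding inj_on_def by blast
  have tw: "\<And>X. X \<in> F \<Longrightarrow> i \<in> X \<longleftrightarrow> j \<in> X"
    using ij(4) unfolding t_def by (metis (mono_tags, lifting) mem_Collect_eq)
  show False
  proof (cases "\<exists>X\<in>F. i \<in> X")
    case False
    have "{i} \<notin> F" using False by auto
    then have "F \<subset> insert {i} F" by auto
    moreover have "insert {i} F \<subseteq> Pow {1..n}" using FP ij by auto
    ultimately have "has_induced_copy butterfly butterfly_le (insert {i} F)" using full by blast
    then show False using no_bf_insert_single[OF nb] False by blast
  next
    case True
    then have ne: "{X\<in>F. i \<in> X} \<noteq> {}" by auto
    obtain X where X: "X \<in> {X\<in>F. i \<in> X}" and Xmin: "\<forall>Y\<in>{X\<in>F. i \<in> X}. Y \<subseteq> X \<longrightarrow> X = Y"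
      using finite_has_minimal[OF _ ne] finF by auto
    have XF: "X \<in> F" and iX: "i \<in> X" using X by auto
    have jX: "j \<in> X" using tw[OF XF] iX by simp
    define S where "S = X - {j}"
    have SX: "S \<subset> X" using jX S_def by auto
    have SF: "S \<notin> F" using tw[of S] ij iX unfolding S_def by auto
    have P1: "S \<subseteq> Y \<longleftrightarrow> X \<subseteq> Y" if "Y \<in> F" for Y
      using tw[OF that] iX SX ij(3) unfolding S_def by auto
    have P2: "Y \<subseteq> S" if "Y \<in> F" "Y \<subset> X" for Y
    proof -
      have "i \<notin> Y" using Xmin that by auto
      then have "j \<notin> Y" using tw[OF that(1)] by simp
      then show ?thesis using that unfolding S_def by auto
    qed
    have "F \<subset> insert S F" using SF by auto
    moreover have "insert S F \<subseteq> Pow {1..n}" using FP XF unfolding S_def by auto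
    ultimately have "has_induced_copy butterfly butterfly_le (insert S F)" using full by blast
    then show False using no_bf_insert_repl[OF nb XF SX P1 P2] by blast
  qed
qed


definition F0 :: "nat \<Rightarrow> nat set set" where
  "F0 n = {X. X \<subseteq> {1..n} \<and> card X \<le> 2} \<union> (\<lambda>k. {1..k}) ` {3..n}"

lemma F0_card:
  assumes "n \<ge> 3"
  shows "card (F0 n) \<le> (n choose 2) + 2 * n - 1"
proof -
  have e: "{X. X \<subseteq> {1..n} \<and> card X \<le> 2} = {X. X \<subseteq> {1..n} \<and> card X = 0} \<union>
     {X. X \<subseteq> {1..n} \<and> card X = 1} \<union> {X. X \<subseteq> {1..n} \<and> card X = 2}" by auto
  have c0: "card {X. X \<subseteq> {1..n} \<and> card X = 0} = 1" using n_subsets[of "{1..n}" 0] by simp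
  have c1: "card {X. X \<subseteq> {1..n} \<and> card X = 1} = n" using n_subsets[of "{1..n}" 1] by simp
  have c2: "card {X. X \<subseteq> {1..n} \<and> card X = 2} = n choose 2" using n_subsets[of "{1..n}" 2] by simp
  have u1: "card ({X. X \<subseteq> {1..n} \<and> card X = 0} \<union> {X. X \<subseteq> {1..n} \<and> card X = 1} \<union> {X. X \<subseteq> {1..n} \<and> card X = 2})
     \<le> card ({X. X \<subseteq> {1..n} \<and> card X = 0} \<union> {X. X \<subseteq> {1..n} \<and> card X = 1}) + card {X. X \<subseteq> {1..n} \<and> card X = 2}"
    by (rule card_Un_le)
  have u2: "card ({X. X \<subseteq> {1..n} \<and> card X = 0} \<union> {X. X \<subseteq> {1..n} \<and> card X = 1})
     \<le> card {X. X \<subseteq> {1..n} \<and> card X = 0} + card {X. X \<subseteq> {1..n} \<and> card X = 1}"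
    by (rule card_Un_le)
  have "card {X. X \<subseteq> {1..n} \<and> card X \<le> 2} \<le> 1 + n + (n choose 2)"
    unfolding e using u1 u2 c0 c1 c2 by linarith
  moreover have "card ((\<lambda>k. {1..k}) ` {3..n}) \<le> n - 2"
    using card_image_le[of "{3..n}" "\<lambda>k. {1..k::nat}"] by simp
  moreover have "card (F0 n) \<le> card {X. X \<subseteq> {1..n} \<and> card X \<le> 2} + card ((\<lambda>k. {1..k}) ` {3..n})"
    unfolding F0_def by (rule card_Un_le)
  ultimately have "card (F0 n) \<le> 1 + n + (n choose 2) + (n - 2)" by linarith
  then show ?thesis using assms by simp
qed

lemma small_sub:
  fixes B :: "nat set"
  assumes "finite B" "card B \<le> 2" "a \<in> B" "c \<in> B" "a \<noteq> c"
  shows "B \<subseteq> {a, c}"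
proof
  fix x assume x: "x \<in> B"
  show "x \<in> {a, c}"
  proof (rule ccontr)
    assume "x \<notin> {a, c}"
    then have "card {a, c, x} = 3" using assms by auto
    moreover have "{a, c, x} \<subseteq> B" using assms x by auto
    ultimately have "3 \<le> card B" using card_mono[OF assms(1)] by metis
    then show False using assms by simp
  qed
qed

lemma F0_nb: "\<not> has_induced_copy butterfly butterfly_le (F0 n)"
proof
  assume "has_induced_copy butterfly butterfly_le (F0 n)"
  then obtain A B C D where G: "A \<in> F0 n" "B \<in> F0 n" "C \<in> F0 n" "D \<in> F0 n"
    and r: "bfrel A B C D" unfolding bf_iff by blast
  have r': "A \<subseteq> B" "A \<subseteq> D" "C \<subseteq> B" "C \<subseteq> D" "\<not> A \<subseteq> C" "\<not> C \<subseteq> A"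
   "\<not> B \<subseteq> D" "\<not> D \<subseteq> B"
    using r unfolding bfrel_def by auto
  obtain a c where ac: "a \<in> A" "a \<notin> C" "c \<in> C" "c \<notin> A" using r'(5,6) by blast
  have small: "finite Z \<and> card Z \<le> 2" if "Z \<in> {X. X \<subseteq> {1..n} \<and> card X \<le> 2}" for Z
    using that finite_subset by auto
  show False
  proof (cases "B \<in> {X. X \<subseteq> {1..n} \<and> card X \<le> 2}")
    case True
    then have "B \<subseteq> {a, c}" using small_sub small[OF True] ac r' by (metis subsetD)
    then have "B \<subseteq> D" using ac r' by blast
    then show False using r' by blast
  next
    case Bc: False
    show False
    proof (cases "D \<in> {X. X \<subseteq> {1..n} \<and> card X \<le> 2}")
      case True
      then have "D \<subseteq> {a, c}" using small_sub small[OF True] ac r' by (metis subsetD)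
      then have "D \<subseteq> B" using ac r' by blast
      then show False using r' by blast
    next
      case False
      then obtain k m where "B = {1..k}" "D = {1..m}" using Bc G unfolding F0_def by auto
      then show False using r' by (metis atLeastatMost_subset_iff nat_le_linear order_refl)
    qed
  qed
qed

lemma F0_full:
  assumes F': "F0 n \<subset> F'" "F' \<subseteq> Pow {1..n}"
  shows "has_induced_copy butterfly butterfly_le F'"
proof -
  obtain S where S: "S \<in> F'" "S \<notin> F0 n" using F' by blast
  have Sn: "S \<subseteq> {1..n}" using S F' by auto
  have finS: "finite S" using Sn finite_subset by auto
  have cS: "card S \<ge> 3" using S Sn unfolding F0_def by auto
  have notch: "S \<noteq> {1..k}" if "3 \<le> k" "k \<le> n" for k using S that unfolding F0_def by auto
  have Sne: "S \<noteq> {}" using cS by auto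
  define m where "m = Max S"
  have mS: "m \<in> S" using Max_in[OF finS Sne] m_def by simp
  have leM: "x \<le> m" if "x \<in> S" for x using Max_ge[OF finS that] m_def by simp
  have mn: "m \<le> n" using mS Sn by auto
  have c1: "card (S - {m}) \<ge> 2" using cS mS finS by simp
  have "S - {m} \<noteq> {}" using c1 by (metis card.empty not_numeral_le_zero)
  then obtain a where a: "a \<in> S - {m}" by blast
  have "card (S - {m} - {a}) \<ge> 1" using c1 a finS by simp
  then have "S - {m} - {a} \<noteq> {}" by (metis card.empty not_one_le_zero)
  then obtain b where b: "b \<in> S - {m} - {a}" by blast
  have am: "a < m" using a leM[of a] by auto
  have bm: "b < m" using b leM[of b] by auto
  have ab: "a \<noteq> b" using b by auto
  have a1: "1 \<le> a" "1 \<le> b" using a b Sn by auto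
  have "\<exists>c\<in>{1..m}. c \<notin> S"
  proof (rule ccontr)
    assume "\<not> (\<exists>c\<in>{1..m}. c \<notin> S)"
    then have "{1..m} \<subseteq> S" by auto
    moreover have "S \<subseteq> {1..m}" using Sn leM by auto
    ultimately have "S = {1..m}" by auto
    moreover then have "3 \<le> m" using cS by simp
    ultimately show False using notch mn by blast
  qed
  then obtain c where c: "c \<in> {1..m}" "c \<notin> S" by blast
  have cm: "c < m" using c mS by (metis atLeastAtMost_iff le_neq_implies_less)
  have "c \<noteq> a" "c \<noteq> b" using c a b by auto
  then have "card {a, b, c} = 3" using ab by simp
  moreover have "{a, b, c} \<subseteq> {1..m-1}" using am bm cm a1 c by auto
  then have "card {a, b, c} \<le> card {1..m-1}" by (intro card_mono) auto
  ultimately have "3 \<le> m - 1" by simp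
  define j where "j = max (max a b) (max c 3)"
  have j: "j < m" "3 \<le> j" "a \<le> j" "b \<le> j" "c \<le> j" using am bm cm \<open>3 \<le> m - 1\<close> unfolding j_def by auto
  have DF: "{1..j} \<in> F0 n" using j mn unfolding F0_def by auto
  have aF: "{a} \<in> F0 n" "{b} \<in> F0 n" using a b Sn unfolding F0_def by auto
  have "bfrel {a} S {b} {1..j}"
  proof -
    have aS: "a \<in> S" "b \<in> S" using a b by auto
    have i1: "a \<in> {1..j}" "b \<in> {1..j}" "c \<in> {1..j}" "1 \<in> {1..j}" "2 \<in> {1..j}" "m \<notin> {1..j}"
      using a1 j c by auto
    have n1: "\<not> S \<subseteq> {1..j}" using mS i1 by blast
    have n2: "\<not> {1..j} \<subseteq> S" using c i1 by blast
    have n3: "\<not> {1..j} \<subseteq> {x}" for x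
    proof
      assume "{1..j} \<subseteq> {x}"
      then have "1 = x" "2 = x" using i1(4,5) by blast+
      then show False by simp
    qed
    have n4: "\<not> S \<subseteq> {a}" "\<not> S \<subseteq> {b}" using aS ab by auto
    show ?thesis unfolding bfrel_def using aS i1 n1 n2 n3 n4 ab by simp
  qed
  then have "has_induced_copy butterfly butterfly_le (insert S (F0 n))"
    unfolding bf_iff using DF aF by blast
  moreover have "insert S (F0 n) \<subseteq> F'" using S(1) F'(1) by auto
  ultimately show ?thesis using bf_mono by blast
qed

lemma F0_sat: "induced_saturated n butterfly butterfly_le (F0 n)"
proof -
  have "F0 n \<subseteq> Pow {1..n}" unfolding F0_def by auto
  then show ?thesis unfolding induced_saturated_def using F0_nb F0_full by blast
qed

theorem theorem1p7:
  fixes n :: nat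
  assumes "n \<ge> 3"
  shows "\<lceil>log 2 (real n)\<rceil> \<le> int (isat n butterfly butterfly_le)
         \<and> isat n butterfly butterfly_le \<le> (n choose 2) + 2 * n - 1"
proof
  have ex: "\<exists>k F. induced_saturated n butterfly butterfly_le F \<and> card F = k"
    using F0_sat by blast
  obtain F where F: "induced_saturated n butterfly butterfly_le F" "card F = isat n butterfly butterfly_le"
    using LeastI_ex[OF ex] unfolding isat_def by blast
  let ?k = "isat n butterfly butterfly_le"
  have "n \<le> 2 ^ ?k" using lower[OF F(1)] F(2) by simp
  then have "real n \<le> 2 ^ ?k" by (metis of_nat_le_iff of_nat_numeral of_nat_power)
  then have l1: "log 2 (real n) \<le> log 2 (2 ^ ?k)"
    by (intro iffD2[OF log_le_cancel_iff]) (use assms in auto)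
  have l2: "log 2 ((2::real) ^ ?k) = real ?k" by (simp add: log_nat_power)
  from l1 l2 have "log 2 (real n) \<le> real ?k" by linarith
  then show "\<lceil>log 2 (real n)\<rceil> \<le> int ?k" by (simp add: ceiling_le_iff)
  have "?k \<le> card (F0 n)" unfolding isat_def by (rule Least_le) (use F0_sat in blast)
  then show "?k \<le> (n choose 2) + 2 * n - 1" using F0_card[OF assms] by linarith
qed

end
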